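(* Let $G$ be a finite abelian group of order $n$, let $S\subset G^n$ be the set of bijections $\{1,\dots,n\}\to G$, and let $m\ge0$ be an integer. Let $\mathfrak{M}_m\subset\hat G^n$ be the set of all $m$-sparse $\chi$ whose nontrivial coordinates are killed by a unique partition with $m/2$ parts (so $\mathfrak M_m=\emptyset$ if $m$ is odd). Then \[ \sum_{m\text{-sparse}~\chi\notin\mathfrak{M}_m}|\widehat{1_S}(\chi)|^3 = O_m\Big(\frac1n\Big(\frac{n!}{n^n}\Big)^3\Big), \] with the implied constant depending only on $m$.
   Context: $\hat G$ is the dual group of $G$, written additively, with $0$ the trivial character. For $\chi=(\chi_1,\dots,\chi_n)\in\hat G^n$, $\widehat{1_S}(\chi)=\frac{1}{n^n}\sum_{\pi\in S}\prod_{i=1}^n\chi_i(\pi(i))$. $\chi$ is $m$-sparse if exactly $m$ of its coordinates are nontrivial. If the nontrivial coordinates of $\chi$ are $\chi_{j_1},\dots,\chi_{j_m}$ (indexed by a set $N=\{j_1,\dots,j_m\}$), a partition $\mathcal P$ of $N$ kills them if $\sum_{i\in P}\chi_i=0$ for every part $P\in\mathcal P$. *)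

theory Defs
  imports "HOL-Algebra.Group" "HOL-Library.Disjoint_Sets" "HOL-Library.FuncSet" Complex_Main
begin

definition character :: "'a monoid \<Rightarrow> ('a \<Rightarrow> complex) \<Rightarrow> bool" where
  "character G chi \<longleftrightarrow>
     (\<forall>x\<in>carrier G. cmod (chi x) = 1) \<and>
     (\<forall>x\<in>carrier G. \<forall>y\<in>carrier G. chi (x \<otimes>\<^bsub>G\<^esub> y) = chi x * chi y) \<and>
     (\<forall>x. x \<notin> carrier G \<longrightarrow> chi x = 0)"

definition trivial_char :: "'a monoid \<Rightarrow> 'a \<Rightarrow> complex" where
  "trivial_char G = (\<lambda>x. if x \<in> carrier G then 1 else 0)"

definition charvecs :: "'a monoid \<Rightarrow> nat \<Rightarrow> (nat \<Rightarrow> 'a \<Rightarrow> complex) set" where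
  "charvecs G n = {chi. (\<forall>i\<in>{1..n}. character G (chi i)) \<and>
                        (\<forall>i. i \<notin> {1..n} \<longrightarrow> chi i = (\<lambda>_. 0))}"

definition bijs :: "'a monoid \<Rightarrow> nat \<Rightarrow> (nat \<Rightarrow> 'a) set" where
  "bijs G n = {pi. bij_betw pi {1..n} (carrier G) \<and> pi \<in> extensional {1..n}}"

definition hat1S :: "'a monoid \<Rightarrow> nat \<Rightarrow> (nat \<Rightarrow> 'a \<Rightarrow> complex) \<Rightarrow> complex" where
  "hat1S G n chi = (1 / of_nat n ^ n) * (\<Sum>pi\<in>bijs G n. \<Prod>i\<in>{1..n}. chi i (pi i))"

definition nontriv_coords :: "'a monoid \<Rightarrow> nat \<Rightarrow> (nat \<Rightarrow> 'a \<Rightarrow> complex) \<Rightarrow> nat set" where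
  "nontriv_coords G n chi = {i\<in>{1..n}. chi i \<noteq> trivial_char G}"

definition sparse :: "'a monoid \<Rightarrow> nat \<Rightarrow> nat \<Rightarrow> (nat \<Rightarrow> 'a \<Rightarrow> complex) \<Rightarrow> bool" where
  "sparse G n m chi \<longleftrightarrow> card (nontriv_coords G n chi) = m"

text \<open>A partition P of the set N of nontrivial coordinates kills chi if the sum (in the
  dual group, i.e. pointwise product) of the characters in every part is trivial.\<close>
definition kills :: "'a monoid \<Rightarrow> nat \<Rightarrow> nat set set \<Rightarrow> (nat \<Rightarrow> 'a \<Rightarrow> complex) \<Rightarrow> bool" where
  "kills G n P chi \<longleftrightarrow> partition_on (nontriv_coords G n chi) P \<and>
     (\<forall>p\<in>P. \<forall>x\<in>carrier G. (\<Prod>i\<in>p. chi i x) = 1)"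

text \<open>M_m: m-sparse chi killed by a unique partition with exactly m/2 parts
  (i.e. 2 * number of parts = m; empty for odd m).\<close>
definition frakM :: "'a monoid \<Rightarrow> nat \<Rightarrow> nat \<Rightarrow> (nat \<Rightarrow> 'a \<Rightarrow> complex) set" where
  "frakM G n m = {chi \<in> charvecs G n. sparse G n m chi \<and>
                   (\<exists>!P. kills G n P chi \<and> 2 * card P = m)}"

end

theory Submission
  imports Defs
begin

lemma char_one:
  assumes "group G" "character G chi"
  shows "chi \<one>\<^bsub>G\<^esub> = 1"
proof -
  have c: "\<one>\<^bsub>G\<^esub> \<in> carrier G" using assms(1) by (simp add: group.is_monoid monoid.one_closed)
  have "chi \<one>\<^bsub>G\<^esub> = chi \<one>\<^bsub>G\<^esub> * chi \<one>\<^bsub>G\<^esub>"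
    using assms c unfolding character_def
    by (metis group.is_monoid monoid.l_one)
  moreover have "chi \<one>\<^bsub>G\<^esub> \<noteq> 0" using assms c unfolding character_def by force
  ultimately show ?thesis by (metis mult_cancel_left1)
qed

lemma char_nz: "character G chi \<Longrightarrow> x \<in> carrier G \<Longrightarrow> chi x \<noteq> 0"
  unfolding character_def by force

lemma char_mult:
  assumes "character G chi" "character G psi"
  shows "character G (\<lambda>x. chi x * psi x)"
  using assms unfolding character_def by (simp add: norm_mult)

lemma char_cnj:
  assumes "character G chi"
  shows "character G (\<lambda>x. cnj (chi x))"
  using assms unfolding character_def by simp

lemma trivial_char_character: "group G \<Longrightarrow> character G (trivial_char G)"
  unfolding character_def trivial_char_def by (simp add: group.is_monoid monoid.m_closed)

lemma char_eq_trivial: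
  assumes "character G chi"
  shows "chi = trivial_char G \<longleftrightarrow> (\<forall>x\<in>carrier G. chi x = 1)"
  using assms unfolding character_def trivial_char_def by (auto simp: fun_eq_iff)

lemma char_sum_nontriv:
  assumes G: "group G" "finite (carrier G)" and c: "character G chi"
    and x0: "x0 \<in> carrier G" "chi x0 \<noteq> 1"
  shows "(\<Sum>x\<in>carrier G. chi x) = 0"
proof -
  have bij: "bij_betw (\<lambda>x. x0 \<otimes>\<^bsub>G\<^esub> x) (carrier G) (carrier G)"
  proof (rule bij_betwI[where g="\<lambda>y. inv\<^bsub>G\<^esub> x0 \<otimes>\<^bsub>G\<^esub> y"])
    show "(\<lambda>x. x0 \<otimes>\<^bsub>G\<^esub> x) \<in> carrier G \<rightarrow> carrier G" using G(1) x0(1) by (simp add: group.is_monoid monoid.m_closed)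
    show "(\<lambda>y. inv\<^bsub>G\<^esub> x0 \<otimes>\<^bsub>G\<^esub> y) \<in> carrier G \<rightarrow> carrier G" using G(1) x0(1) by (simp add: group.is_monoid monoid.m_closed)
    show "inv\<^bsub>G\<^esub> x0 \<otimes>\<^bsub>G\<^esub> (x0 \<otimes>\<^bsub>G\<^esub> x) = x" if "x \<in> carrier G" for x
      using G(1) x0(1) that by (simp add: monoid.m_assoc[symmetric] group.is_monoid group.l_inv group.inv_closed)
    show "x0 \<otimes>\<^bsub>G\<^esub> (inv\<^bsub>G\<^esub> x0 \<otimes>\<^bsub>G\<^esub> y) = y" if "y \<in> carrier G" for y
      using G(1) x0(1) that by (simp add: monoid.m_assoc[symmetric] group.is_monoid group.r_inv group.inv_closed)
  qed
  have "(\<Sum>x\<in>carrier G. chi x) = (\<Sum>x\<in>carrier G. chi (x0 \<otimes>\<^bsub>G\<^esub> x))"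
    using sum.reindex_bij_betw[OF bij, of chi] by simp
  also have "\<dots> = chi x0 * (\<Sum>x\<in>carrier G. chi x)"
    using c x0 unfolding character_def by (simp add: sum_distrib_left)
  finally have "(1 - chi x0) * (\<Sum>x\<in>carrier G. chi x) = 0" by (simp add: algebra_simps)
  thus ?thesis using x0(2) by simp
qed

lemma char_sum_triv:
  assumes "\<forall>x\<in>carrier G. chi x = 1"
  shows "(\<Sum>x\<in>carrier G. chi x) = of_nat (card (carrier G))"
  using assms by simp

lemma char_cnj_mult: "character G chi \<Longrightarrow> x \<in> carrier G \<Longrightarrow> chi x * cnj (chi x) = 1"
  unfolding character_def by (metis complex_norm_square of_real_1 power_one)

lemma char_orth:
  assumes G: "group G" "finite (carrier G)" and c: "character G chi" "character G psi"
    and ne: "chi \<noteq> psi"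
  shows "(\<Sum>x\<in>carrier G. chi x * cnj (psi x)) = 0"
proof -
  have ph: "character G (\<lambda>x. chi x * cnj (psi x))" using c by (simp add: char_mult char_cnj)
  have "\<exists>x\<in>carrier G. chi x * cnj (psi x) \<noteq> 1"
  proof (rule ccontr)
    assume "\<not> ?thesis"
    hence h: "\<forall>x\<in>carrier G. chi x * cnj (psi x) = 1" by blast
    have "chi x = psi x" for x
    proof (cases "x \<in> carrier G")
      case True
      have "chi x = chi x * (cnj (psi x) * psi x)" using char_cnj_mult[OF c(2) True] by (simp add: mult.commute)
      also have "\<dots> = psi x" using h True by (simp add: mult.assoc[symmetric])
      finally show ?thesis .
    next
      case False thus ?thesis using c unfolding character_def by simp
    qed
    thus False using ne by auto
  qed
  then obtain x0 where "x0 \<in> carrier G" "chi x0 * cnj (psi x0) \<noteq> 1" by blast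
  from char_sum_nontriv[OF G ph this] show ?thesis .
qed

lemma char_card_le:
  assumes G: "group G" "finite (carrier G)" and X: "finite X" "\<forall>chi\<in>X. character G chi"
  shows "card X \<le> card (carrier G)"
proof -
  define s where "s x = (\<Sum>chi\<in>X. chi x)" for x
  have "(\<Sum>x\<in>carrier G. s x * cnj (s x)) = (\<Sum>x\<in>carrier G. \<Sum>chi\<in>X. \<Sum>psi\<in>X. chi x * cnj (psi x))"
    unfolding s_def by (simp add: sum_product)
  also have "\<dots> = (\<Sum>chi\<in>X. \<Sum>psi\<in>X. \<Sum>x\<in>carrier G. chi x * cnj (psi x))"
    by (simp add: sum.swap[of _ "carrier G"])
  also have "\<dots> = (\<Sum>chi\<in>X. \<Sum>psi\<in>X. if psi = chi then of_nat (card (carrier G)) else 0)"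
  proof (intro sum.cong refl)
    fix chi psi assume "chi \<in> X" "psi \<in> X"
    thus "(\<Sum>x\<in>carrier G. chi x * cnj (psi x)) = (if psi = chi then of_nat (card (carrier G)) else 0)"
      using char_orth[OF G, of chi psi] char_cnj_mult[of G chi] X by auto
  qed
  also have "\<dots> = of_nat (card X * card (carrier G))"
    using X(1) by (simp add: sum.delta)
  finally have eq: "(\<Sum>x\<in>carrier G. s x * cnj (s x)) = of_nat (card X * card (carrier G))" .
  have "(\<Sum>x\<in>carrier G. s x * cnj (s x)) = of_real (\<Sum>x\<in>carrier G. (cmod (s x))^2)"
    by (simp add: complex_norm_square del: of_real_power)
  with eq have eqr: "(\<Sum>x\<in>carrier G. (cmod (s x))^2) = real (card X * card (carrier G))"
    by (metis of_real_eq_iff of_real_of_nat_eq)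
  have one: "\<one>\<^bsub>G\<^esub> \<in> carrier G" using G(1) by (simp add: group.is_monoid monoid.one_closed)
  have "s \<one>\<^bsub>G\<^esub> = of_nat (card X)" 
  proof -
    have "(\<Sum>chi\<in>X. chi \<one>\<^bsub>G\<^esub>) = (\<Sum>chi\<in>X. 1)"
      using X char_one[OF G(1)] by (intro sum.cong) auto
    thus ?thesis unfolding s_def by simp
  qed
  hence "real (card X)^2 \<le> (\<Sum>x\<in>carrier G. (cmod (s x))^2)"
    using member_le_sum[of "\<one>\<^bsub>G\<^esub>" "carrier G" "\<lambda>x. (cmod (s x))^2"] one G(2) by simp
  with eqr have "real (card X) * real (card X) \<le> real (card X) * real (card (carrier G))"
    by (simp add: power2_eq_square)
  hence "card X * card X \<le> card X * card (carrier G)"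
    by (metis of_nat_le_iff of_nat_mult)
  thus ?thesis by (cases "card X = 0") auto
qed

lemma chars_finite_card:
  assumes G: "group G" "finite (carrier G)"
  shows "finite {chi. character G chi} \<and> card {chi. character G chi} \<le> card (carrier G)"
proof -
  have fin: "finite {chi. character G chi}"
  proof (rule ccontr)
    assume "infinite {chi. character G chi}"
    then obtain X where "finite X" "card X = Suc (card (carrier G))" "X \<subseteq> {chi. character G chi}"
      using infinite_arbitrarily_large by blast
    thus False using char_card_le[OF G, of X] by auto
  qed
  thus ?thesis using char_card_le[OF G fin] by auto
qed

definition injs :: "'a monoid \<Rightarrow> nat set \<Rightarrow> (nat \<Rightarrow> 'a) set" where
  "injs G I = {f. inj_on f I \<and> f ` I \<subseteq> carrier G \<and> f \<in> extensional I}"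

definition Ssum :: "'a monoid \<Rightarrow> (nat \<Rightarrow> 'a \<Rightarrow> complex) \<Rightarrow> nat set \<Rightarrow> complex" where
  "Ssum G chi I = (\<Sum>f\<in>injs G I. \<Prod>i\<in>I. chi i (f i))"

definition KP :: "'a monoid \<Rightarrow> (nat \<Rightarrow> 'a \<Rightarrow> complex) \<Rightarrow> nat set \<Rightarrow> nat set set set" where
  "KP G chi I = {P. partition_on I P \<and> (\<forall>p\<in>P. \<forall>x\<in>carrier G. (\<Prod>i\<in>p. chi i x) = 1)}"

lemma injs_subset: "injs G I \<subseteq> (\<Pi>\<^sub>E i\<in>I. carrier G)"
  unfolding injs_def by (auto simp: PiE_def Pi_def)

lemma finite_injs: "finite I \<Longrightarrow> finite (carrier G) \<Longrightarrow> finite (injs G I)"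
  by (rule finite_subset[OF injs_subset]) (simp add: finite_PiE)

lemma injs_empty: "injs G {} = {\<lambda>_. undefined}"
  unfolding injs_def by (auto simp: extensional_def)

lemma KP_empty: "KP G chi {} = {{}}"
  unfolding KP_def by (auto simp: partition_on_empty)

lemma KP_finite: "finite I \<Longrightarrow> finite (KP G chi I)"
  by (rule finite_subset[of _ "Pow (Pow I)"]) (auto simp: KP_def partition_on_def)

lemma injs_insert_sum:
  assumes "finite I" "j \<notin> I" "finite (carrier G)"
  shows "(\<Sum>f\<in>injs G (insert j I). F f) =
         (\<Sum>g\<in>injs G I. \<Sum>x\<in>carrier G - g ` I. F (g(j := x)))"
proof -
  let ?S = "Sigma (injs G I) (\<lambda>g. carrier G - g ` I)"
  let ?h = "\<lambda>(g, x). g(j := x)"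
  have bij: "bij_betw ?h ?S (injs G (insert j I))"
  proof (rule bij_betwI[where g="\<lambda>f. (f(j := undefined), f j)"])
    show "?h \<in> ?S \<rightarrow> injs G (insert j I)"
    proof
      fix gx assume "gx \<in> ?S"
      then obtain g x where gx: "gx = (g, x)" "g \<in> injs G I" "x \<in> carrier G" "x \<notin> g ` I" by auto
      have ig: "inj_on g I" "g ` I \<subseteq> carrier G" "g \<in> extensional I" using gx(2) unfolding injs_def by auto
      have e: "\<And>k. k \<in> I \<Longrightarrow> (g(j := x)) k = g k" using assms(2) by auto
      have "inj_on (g(j := x)) I" using ig(1) inj_on_cong[of I "g(j:=x)" g] e by blast
      moreover have "(g(j := x)) ` I = g ` I" using e by (rule image_cong[OF refl])
      ultimately have "inj_on (g(j := x)) (insert j I)" using gx(4) assms(2) by auto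
      moreover have "(g(j := x)) ` insert j I \<subseteq> carrier G" using e ig(2) gx(3) by auto
      moreover have "g(j := x) \<in> extensional (insert j I)" using ig(3) by (auto simp: extensional_def)
      ultimately show "?h gx \<in> injs G (insert j I)" unfolding injs_def gx(1) by (simp del: fun_upd_apply)
    qed
    show "(\<lambda>f. (f(j := undefined), f j)) \<in> injs G (insert j I) \<rightarrow> ?S"
    proof
      fix f assume "f \<in> injs G (insert j I)"
      hence f: "inj_on f (insert j I)" "f ` insert j I \<subseteq> carrier G" "f \<in> extensional (insert j I)"
        unfolding injs_def by auto
      have e: "\<And>k. k \<in> I \<Longrightarrow> (f(j := undefined)) k = f k" using assms(2) by auto
      have "inj_on (f(j := undefined)) I" using f(1) inj_on_cong[of I "f(j:=undefined)" f] e
        by (meson inj_on_insert)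
      moreover have im: "(f(j := undefined)) ` I = f ` I" using e by (rule image_cong[OF refl])
      moreover have "(f(j := undefined)) \<in> extensional I" using f(3) by (auto simp: extensional_def)
      ultimately have "f(j := undefined) \<in> injs G I" using f(2) unfolding injs_def by auto
      moreover have "f j \<in> carrier G - (f(j := undefined)) ` I"
        using f(1,2) im assms(2) by auto
      ultimately show "(\<lambda>f. (f(j := undefined), f j)) f \<in> ?S" by simp
    qed
    show "(\<lambda>f. (f(j := undefined), f j)) (?h gx) = gx" if "gx \<in> ?S" for gx
    proof -
      obtain g x where gx: "gx = (g, x)" "g \<in> injs G I" using \<open>gx \<in> ?S\<close> by auto
      have "g j = undefined" using gx(2) assms(2) unfolding injs_def extensional_def by auto
      hence "(g(j := x))(j := undefined) = g" by auto
      thus ?thesis using gx(1) by simp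
    qed
    show "?h (f(j := undefined), f j) = f" if "f \<in> injs G (insert j I)" for f
      by auto
  qed
  have fin: "finite (injs G I)" using assms(1,3) by (rule finite_injs)
  have "(\<Sum>g\<in>injs G I. \<Sum>x\<in>carrier G - g ` I. F (g(j := x))) = (\<Sum>gx\<in>?S. F (?h gx))"
    using fin assms(3) by (subst sum.Sigma) (auto simp: split_def)
  also have "\<dots> = (\<Sum>f\<in>injs G (insert j I). F f)"
    using sum.reindex_bij_betw[OF bij, of F] by (simp add: split_def)
  finally show ?thesis by simp
qed

lemma Ssum_insert:
  assumes fin: "finite I" "finite (carrier G)" and j: "j \<notin> I"
  shows "Ssum G chi (insert j I) = (\<Sum>x\<in>carrier G. chi j x) * Ssum G chi I
           - (\<Sum>i\<in>I. Ssum G (chi(i := (\<lambda>x. chi i x * chi j x))) I)"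
proof -
  have "Ssum G chi (insert j I) = (\<Sum>g\<in>injs G I. \<Sum>x\<in>carrier G - g ` I. chi j x * (\<Prod>k\<in>I. chi k (g k)))"
    unfolding Ssum_def injs_insert_sum[OF fin(1) j fin(2)]
  proof (intro sum.cong refl)
    fix g x assume "g \<in> injs G I" "x \<in> carrier G - g ` I"
    have "(\<Prod>k\<in>I. chi k ((g(j := x)) k)) = (\<Prod>k\<in>I. chi k (g k))"
      using j by (intro prod.cong) auto
    thus "(\<Prod>k\<in>insert j I. chi k ((g(j := x)) k)) = chi j x * (\<Prod>k\<in>I. chi k (g k))"
      using fin j by simp
  qed
  also have "\<dots> = (\<Sum>g\<in>injs G I. (\<Prod>k\<in>I. chi k (g k)) * ((\<Sum>x\<in>carrier G. chi j x) - (\<Sum>i\<in>I. chi j (g i))))"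
  proof (intro sum.cong refl)
    fix g assume g: "g \<in> injs G I"
    have "(\<Sum>x\<in>carrier G - g ` I. chi j x) = (\<Sum>x\<in>carrier G. chi j x) - (\<Sum>x\<in>g ` I. chi j x)"
      using g fin by (intro sum_diff) (auto simp: injs_def)
    also have "(\<Sum>x\<in>g ` I. chi j x) = (\<Sum>i\<in>I. chi j (g i))"
      using g by (subst sum.reindex) (auto simp: injs_def)
    finally show "(\<Sum>x\<in>carrier G - g ` I. chi j x * (\<Prod>k\<in>I. chi k (g k))) =
        (\<Prod>k\<in>I. chi k (g k)) * ((\<Sum>x\<in>carrier G. chi j x) - (\<Sum>i\<in>I. chi j (g i)))"
      by (subst sum_distrib_right[symmetric]) (simp add: mult.commute)
  qed
  also have "\<dots> = (\<Sum>x\<in>carrier G. chi j x) * Ssum G chi I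
      - (\<Sum>i\<in>I. \<Sum>g\<in>injs G I. chi j (g i) * (\<Prod>k\<in>I. chi k (g k)))"
  proof -
    have "\<And>g. (\<Prod>k\<in>I. chi k (g k)) * ((\<Sum>x\<in>carrier G. chi j x) - (\<Sum>i\<in>I. chi j (g i)))
       = (\<Sum>x\<in>carrier G. chi j x) * (\<Prod>k\<in>I. chi k (g k)) - (\<Sum>i\<in>I. chi j (g i) * (\<Prod>k\<in>I. chi k (g k)))"
      by (simp add: right_diff_distrib sum_distrib_right mult.commute)
    hence "(\<Sum>g\<in>injs G I. (\<Prod>k\<in>I. chi k (g k)) * ((\<Sum>x\<in>carrier G. chi j x) - (\<Sum>i\<in>I. chi j (g i))))
      = (\<Sum>g\<in>injs G I. (\<Sum>x\<in>carrier G. chi j x) * (\<Prod>k\<in>I. chi k (g k))) - (\<Sum>g\<in>injs G I. \<Sum>i\<in>I. chi j (g i) * (\<Prod>k\<in>I. chi k (g k)))"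
      by (simp add: sum_subtractf)
    also have "\<dots> = (\<Sum>x\<in>carrier G. chi j x) * Ssum G chi I
      - (\<Sum>i\<in>I. \<Sum>g\<in>injs G I. chi j (g i) * (\<Prod>k\<in>I. chi k (g k)))"
      unfolding Ssum_def by (simp add: sum_distrib_left sum.swap[of _ "injs G I"])
    finally show ?thesis .
  qed
  also have "(\<Sum>i\<in>I. \<Sum>g\<in>injs G I. chi j (g i) * (\<Prod>k\<in>I. chi k (g k)))
      = (\<Sum>i\<in>I. Ssum G (chi(i := (\<lambda>x. chi i x * chi j x))) I)"
    unfolding Ssum_def
  proof (intro sum.cong refl)
    fix i g assume i: "i \<in> I"
    have "(\<Prod>k\<in>I. (chi(i := (\<lambda>x. chi i x * chi j x))) k (g k))
        = (chi i (g i) * chi j (g i)) * (\<Prod>k\<in>I - {i}. chi k (g k))"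
      using i fin by (simp add: prod.remove)
    also have "\<dots> = chi j (g i) * (\<Prod>k\<in>I. chi k (g k))"
      using i fin by (simp add: prod.remove)
    finally show "chi j (g i) * (\<Prod>k\<in>I. chi k (g k)) = (\<Prod>k\<in>I. (chi(i := (\<lambda>x. chi i x * chi j x))) k (g k))"
      by simp
  qed
  finally show ?thesis .
qed

definition mergeP :: "nat \<Rightarrow> nat \<Rightarrow> nat set set \<Rightarrow> nat set set" where
  "mergeP i j P = (\<lambda>p. if i \<in> p then insert j p else p) ` P"

lemma mergeP_inv:
  assumes "j \<notin> \<Union>P"
  shows "(\<lambda>q. q - {j}) ` mergeP i j P = P"
proof -
  have "(\<lambda>q. q - {j}) ` mergeP i j P = (\<lambda>p. (if i \<in> p then insert j p else p) - {j}) ` P"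
    unfolding mergeP_def image_image ..
  also have "\<dots> = (\<lambda>p. p) ` P"
    using assms by (intro image_cong refl) auto
  finally show ?thesis by simp
qed

lemma mergeP_card:
  assumes "j \<notin> \<Union>P"
  shows "card (mergeP i j P) = card P"
  unfolding mergeP_def
proof (rule card_image)
  show "inj_on (\<lambda>p. if i \<in> p then insert j p else p) P"
  proof (rule inj_on_inverseI[where g="\<lambda>q. q - {j}"])
    fix p assume "p \<in> P" thus "(if i \<in> p then insert j p else p) - {j} = p" using assms by auto
  qed
qed

lemma KP_merge:
  assumes fin: "finite I" and j: "j \<notin> I" and i: "i \<in> I"
    and P: "P \<in> KP G (chi(i := (\<lambda>x. chi i x * chi j x))) I"
  shows "mergeP i j P \<in> KP G chi (insert j I)"
proof -
  have part: "partition_on I P" and kill: "\<And>p x. p \<in> P \<Longrightarrow> x \<in> carrier G \<Longrightarrow>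
      (\<Prod>k\<in>p. (chi(i := (\<lambda>x. chi i x * chi j x))) k x) = 1"
    using P unfolding KP_def by auto
  have UP: "\<Union>P = I" using part by (simp add: partition_on_def)
  then obtain p0 where p0: "p0 \<in> P" "i \<in> p0" using i by auto
  have jP: "j \<notin> p" if "p \<in> P" for p using that UP j by auto
  have fp: "finite p" if "p \<in> P" for p using that UP fin by (meson Union_upper finite_subset)
  have dis: "disjoint P" using part by (simp add: partition_on_def)
  have "partition_on (insert j I) (mergeP i j P)"
  proof (rule partition_onI)
    show "\<Union>(mergeP i j P) = insert j I"
      unfolding mergeP_def using p0 UP by (auto split: if_splits)
    show "{} \<notin> mergeP i j P"
      unfolding mergeP_def using part by (auto simp: partition_on_def split: if_splits)
    fix p q assume "p \<in> mergeP i j P" "q \<in> mergeP i j P" "p \<noteq> q"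
    obtain p' where p': "p' \<in> P" "p = (if i \<in> p' then insert j p' else p')"
      using \<open>p \<in> mergeP i j P\<close> unfolding mergeP_def by blast
    obtain q' where q': "q' \<in> P" "q = (if i \<in> q' then insert j q' else q')"
      using \<open>q \<in> mergeP i j P\<close> unfolding mergeP_def by blast
    note pq = p'(1) q'(1) p'(2) q'(2)
    with \<open>p \<noteq> q\<close> have "p' \<noteq> q'" by auto
    hence d: "disjnt p' q'" using dis pq by (meson pairwiseD)
    thus "disjnt p q" using pq jP d by (auto simp: disjnt_def)
  qed
  moreover have "\<forall>p\<in>mergeP i j P. \<forall>x\<in>carrier G. (\<Prod>k\<in>p. chi k x) = 1"
  proof (intro ballI)
    fix q x assume q: "q \<in> mergeP i j P" and x: "x \<in> carrier G"
    then obtain p where p: "p \<in> P" "q = (if i \<in> p then insert j p else p)" unfolding mergeP_def by blast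
    show "(\<Prod>k\<in>q. chi k x) = 1"
    proof (cases "i \<in> p")
      case True
      have "(\<Prod>k\<in>q. chi k x) = chi j x * (\<Prod>k\<in>p. chi k x)"
        using p True jP fp by simp
      also have "\<dots> = chi j x * (chi i x * (\<Prod>k\<in>p - {i}. chi k x))"
        using True fp p by (simp add: prod.remove)
      also have "\<dots> = (\<Prod>k\<in>p. (chi(i := (\<lambda>x. chi i x * chi j x))) k x)"
        using True fp p by (simp add: prod.remove)
      also have "\<dots> = 1" using kill p x by blast
      finally show ?thesis .
    next
      case False
      have "(\<Prod>k\<in>q. chi k x) = (\<Prod>k\<in>p. (chi(i := (\<lambda>x. chi i x * chi j x))) k x)"
        using False p by (intro prod.cong) auto
      also have "\<dots> = 1" using kill p x by blast
      finally show ?thesis .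
    qed
  qed
  ultimately show ?thesis unfolding KP_def by blast
qed

lemma KP_triv:
  assumes fin: "finite I" and j: "j \<notin> I" and triv: "\<forall>x\<in>carrier G. chi j x = 1"
    and P: "P \<in> KP G chi I"
  shows "insert {j} P \<in> KP G chi (insert j I)" "card (insert {j} P) = Suc (card P)"
proof -
  have part: "partition_on I P" using P unfolding KP_def by auto
  have UP: "\<Union>P = I" using part by (simp add: partition_on_def)
  have nj: "{j} \<notin> P" using UP j by auto
  have finP: "finite P" using finite_elements[OF fin part] .
  show "card (insert {j} P) = Suc (card P)" using nj finP by simp
  have "partition_on (insert j I) (insert {j} P)"
    using part UP j by (subst partition_on_insert) (auto simp: disjnt_def)
  thus "insert {j} P \<in> KP G chi (insert j I)" using P triv unfolding KP_def by auto
qed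

lemma Ssum_bound:
  assumes G: "group G" "finite (carrier G)" and fin: "finite I"
  shows "(\<forall>i\<in>I. character G (chi i)) \<Longrightarrow>
    cmod (Ssum G chi I) \<le> fact (card I) * (\<Sum>P\<in>KP G chi I. real (card (carrier G)) ^ card P)"
  using fin
proof (induction I arbitrary: chi rule: finite_induct)
  case empty
  thus ?case by (simp add: Ssum_def injs_empty KP_empty)
next
  case (insert j I)
  let ?n = "real (card (carrier G))"
  let ?A = "(\<Sum>P\<in>KP G chi (insert j I). ?n ^ card P)"
  let ?T = "(\<Sum>x\<in>carrier G. chi j x)"
  define chi' where "chi' i = chi(i := (\<lambda>x. chi i x * chi j x))" for i
  have A0: "?A \<ge> 0" by (simp add: sum_nonneg)
  have cj: "character G (chi j)" using insert.prems by simp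
  have c': "\<forall>k\<in>I. character G (chi' i k)" if "i \<in> I" for i
    using insert.prems that unfolding chi'_def by (auto intro: char_mult)
  have rec: "Ssum G chi (insert j I) = ?T * Ssum G chi I - (\<Sum>i\<in>I. Ssum G (chi' i) I)"
    unfolding chi'_def using Ssum_insert[OF insert.hyps(1) G(2) insert.hyps(2)] .
  have IH0: "cmod (Ssum G chi I) \<le> fact (card I) * (\<Sum>P\<in>KP G chi I. ?n ^ card P)"
    using insert.IH insert.prems by simp
  have part1: "cmod ?T * (\<Sum>P\<in>KP G chi I. ?n ^ card P) \<le> ?A"
  proof (cases "\<forall>x\<in>carrier G. chi j x = 1")
    case True
    hence T: "?T = of_nat (card (carrier G))" by simp
    have "cmod ?T * (\<Sum>P\<in>KP G chi I. ?n ^ card P) = (\<Sum>P\<in>KP G chi I. ?n ^ card (insert {j} P))"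
      using KP_triv(2)[of I j G chi, OF insert.hyps(1,2) True] by (simp add: T sum_distrib_left)
    also have "\<dots> = (\<Sum>Q\<in>insert {j} ` KP G chi I. ?n ^ card Q)"
    proof (rule sum.reindex[symmetric, unfolded comp_def])
      show "inj_on (insert {j}) (KP G chi I)"
      proof (rule inj_on_inverseI[where g="\<lambda>Q. Q - {{j}}"])
        fix P assume "P \<in> KP G chi I"
        hence "{j} \<notin> P" using insert.hyps(2) unfolding KP_def partition_on_def by auto
        thus "insert {j} P - {{j}} = P" by auto
      qed
    qed
    also have "\<dots> \<le> ?A"
      using KP_triv(1)[of I j G chi, OF insert.hyps(1,2) True] KP_finite[OF finite_insert[THEN iffD2, OF insert.hyps(1)]]
      by (intro sum_mono2) auto
    finally show ?thesis .
  next
    case False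
    then obtain x0 where "x0 \<in> carrier G" "chi j x0 \<noteq> 1" by blast
    hence "?T = 0" using char_sum_nontriv[OF G cj] by blast
    thus ?thesis using A0 by simp
  qed
  have part2: "cmod (Ssum G (chi' i) I) \<le> fact (card I) * ?A" if i: "i \<in> I" for i
  proof -
    have "cmod (Ssum G (chi' i) I) \<le> fact (card I) * (\<Sum>P\<in>KP G (chi' i) I. ?n ^ card P)"
      using insert.IH c'[OF i] by blast
    also have "(\<Sum>P\<in>KP G (chi' i) I. ?n ^ card P) = (\<Sum>P\<in>KP G (chi' i) I. ?n ^ card (mergeP i j P))"
    proof (intro sum.cong refl)
      fix P assume "P \<in> KP G (chi' i) I"
      hence "\<Union>P = I" unfolding KP_def partition_on_def by auto
      thus "?n ^ card P = ?n ^ card (mergeP i j P)" using insert.hyps(2) mergeP_card[of j P i] by simp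
    qed
    also have "\<dots> = (\<Sum>Q\<in>mergeP i j ` KP G (chi' i) I. ?n ^ card Q)"
    proof (rule sum.reindex[symmetric, unfolded comp_def])
      show "inj_on (mergeP i j) (KP G (chi' i) I)"
      proof (rule inj_on_inverseI[where g="\<lambda>Q. (\<lambda>q. q - {j}) ` Q"])
        fix P assume "P \<in> KP G (chi' i) I"
        hence "\<Union>P = I" unfolding KP_def partition_on_def by auto
        thus "(\<lambda>q. q - {j}) ` mergeP i j P = P" using insert.hyps(2) mergeP_inv[of j P i] by simp
      qed
    qed
    also have "\<dots> \<le> ?A"
      using KP_merge[OF insert.hyps(1,2) i, of _ G chi] KP_finite[OF finite_insert[THEN iffD2, OF insert.hyps(1)]]
      unfolding chi'_def by (intro sum_mono2) auto
    finally show ?thesis by (simp add: mult_left_mono)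
  qed
  have "cmod (Ssum G chi (insert j I)) \<le> cmod ?T * cmod (Ssum G chi I) + (\<Sum>i\<in>I. cmod (Ssum G (chi' i) I))"
  proof -
    have "cmod (?T * Ssum G chi I - (\<Sum>i\<in>I. Ssum G (chi' i) I)) \<le> cmod (?T * Ssum G chi I) + cmod (\<Sum>i\<in>I. Ssum G (chi' i) I)"
      by (rule norm_triangle_ineq4)
    also have "\<dots> \<le> cmod ?T * cmod (Ssum G chi I) + (\<Sum>i\<in>I. cmod (Ssum G (chi' i) I))"
      by (simp add: norm_mult norm_sum)
    finally show ?thesis unfolding rec .
  qed
  also have "\<dots> \<le> cmod ?T * (fact (card I) * (\<Sum>P\<in>KP G chi I. ?n ^ card P)) + (\<Sum>i\<in>I. fact (card I) * ?A)"
    using IH0 part2 by (intro add_mono mult_left_mono sum_mono) auto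
  also have "\<dots> \<le> fact (card I) * ?A + real (card I) * (fact (card I) * ?A)"
    using part1 by (simp add: mult_left_mono mult.left_commute)
  also have "\<dots> = fact (card (insert j I)) * ?A"
    using insert.hyps by (simp add: distrib_right)
  finally show ?case .
qed

lemma Ssum_triv_insert:
  assumes fin: "finite I" "finite (carrier G)" and j: "j \<notin> I"
    and triv: "\<forall>x\<in>carrier G. chi j x = 1" and ch: "\<forall>i\<in>I. character G (chi i)"
  shows "Ssum G chi (insert j I) = (of_nat (card (carrier G)) - of_nat (card I)) * Ssum G chi I"
proof -
  have m: "chi(i := (\<lambda>x. chi i x * chi j x)) = chi" if "i \<in> I" for i
  proof -
    have "chi i x * chi j x = chi i x" for x
      using triv ch that unfolding character_def by (cases "x \<in> carrier G") auto
    thus ?thesis by (auto simp: fun_eq_iff)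
  qed
  have "Ssum G chi (insert j I) = of_nat (card (carrier G)) * Ssum G chi I - (\<Sum>i\<in>I. Ssum G chi I)"
    using Ssum_insert[OF fin j, of chi] triv m by simp
  thus ?thesis by (simp add: algebra_simps)
qed

lemma Ssum_extend:
  assumes fin: "finite T" "finite N" "finite (carrier G)" and dis: "N \<inter> T = {}"
    and triv: "\<forall>j\<in>T. \<forall>x\<in>carrier G. chi j x = 1" and ch: "\<forall>i\<in>N \<union> T. character G (chi i)"
  shows "Ssum G chi (N \<union> T) =
    (\<Prod>k<card T. (of_nat (card (carrier G)) - of_nat (card N + k))) * Ssum G chi N"
  using fin(1) dis triv ch
proof (induction T rule: finite_induct)
  case empty thus ?case by simp
next
  case (insert t T)
  have t: "t \<notin> N \<union> T" using insert by auto
  have "Ssum G chi (N \<union> insert t T) = Ssum G chi (insert t (N \<union> T))" by simp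
  also have "\<dots> = (of_nat (card (carrier G)) - of_nat (card (N \<union> T))) * Ssum G chi (N \<union> T)"
    using Ssum_triv_insert[OF _ fin(3) t] insert.prems insert.hyps fin(2) by simp
  also have "card (N \<union> T) = card N + card T"
    using insert fin by (simp add: card_Un_disjoint)
  also have "Ssum G chi (N \<union> T) = (\<Prod>k<card T. (of_nat (card (carrier G)) - of_nat (card N + k))) * Ssum G chi N"
    using insert by auto
  finally show ?case using insert.hyps by (simp add: mult_ac)
qed

lemma prod_rev_fact: "(\<Prod>k<r. (of_nat (r - k) :: complex)) = fact r"
proof -
  have "(\<Prod>k<r. (of_nat (r - k) :: complex)) = of_nat (\<Prod>k<r. r - k)" by simp
  also have "(\<Prod>k<r. r - k) = (\<Prod>k=0..<r. r - k)" by (simp add: lessThan_atLeast0)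
  finally show ?thesis by (simp add: fact_prod_rev)
qed

lemma bijs_eq_injs:
  assumes "card (carrier G) = n" "finite (carrier G)"
  shows "bijs G n = injs G {1..n}"
proof -
  have "bij_betw pi {1..n} (carrier G) \<longleftrightarrow> inj_on pi {1..n} \<and> pi ` {1..n} \<subseteq> carrier G" for pi
  proof
    assume "inj_on pi {1..n} \<and> pi ` {1..n} \<subseteq> carrier G"
    moreover have "card (pi ` {1..n}) = card (carrier G)" if "inj_on pi {1..n}"
      using assms that by (simp add: card_image)
    ultimately have "pi ` {1..n} = carrier G" using assms(2) by (simp add: card_subset_eq)
    thus "bij_betw pi {1..n} (carrier G)" using \<open>inj_on pi {1..n} \<and> _\<close> by (simp add: bij_betw_def)
  qed (simp add: bij_betw_def)
  thus ?thesis unfolding bijs_def injs_def by blast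
qed

lemma hat_eq:
  assumes G: "group G" "finite (carrier G)" and n: "n = card (carrier G)"
    and chi: "chi \<in> charvecs G n"
  shows "hat1S G n chi = (fact (n - card (nontriv_coords G n chi)) / of_nat n ^ n) * Ssum G chi (nontriv_coords G n chi)"
proof -
  let ?N = "nontriv_coords G n chi"
  let ?T = "{1..n} - ?N"
  have N: "?N \<subseteq> {1..n}" unfolding nontriv_coords_def by auto
  hence fN: "finite ?N" by (rule finite_subset) simp
  have cN: "card ?N \<le> n" using card_mono[OF _ N] by simp
  have ch: "\<forall>i\<in>{1..n}. character G (chi i)" using chi unfolding charvecs_def by auto
  have triv: "\<forall>j\<in>?T. \<forall>x\<in>carrier G. chi j x = 1"
    using ch unfolding nontriv_coords_def by (auto simp: char_eq_trivial)
  have U: "?N \<union> ?T = {1..n}" using N by auto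
  have cT: "card ?T = n - card ?N" using N fN by (simp add: card_Diff_subset)
  have "Ssum G chi {1..n} = (\<Prod>k<card ?T. (of_nat (card (carrier G)) - of_nat (card ?N + k))) * Ssum G chi ?N"
    using Ssum_extend[of ?T ?N G chi] fN G(2) ch triv U by auto
  also have "(\<Prod>k<card ?T. (of_nat (card (carrier G)) - of_nat (card ?N + k)) :: complex)
     = (\<Prod>k<card ?T. of_nat (card ?T - k))"
  proof (intro prod.cong refl)
    fix k assume "k \<in> {..<card ?T}"
    hence le: "card ?N + k \<le> card (carrier G)" using cT cN n by simp
    have "card ?T - k = card (carrier G) - (card ?N + k)" using cT n by simp
    thus "(of_nat (card (carrier G)) - of_nat (card ?N + k) :: complex) = of_nat (card ?T - k)"
      using le by (simp add: of_nat_diff)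
  qed
  also have "\<dots> = fact (card ?T)" by (rule prod_rev_fact)
  finally have S: "Ssum G chi {1..n} = fact (n - card ?N) * Ssum G chi ?N" using cT by simp
  have "hat1S G n chi = (1 / of_nat n ^ n) * Ssum G chi {1..n}"
    unfolding hat1S_def Ssum_def using bijs_eq_injs[of G n] n G(2) by simp
  thus ?thesis using S by simp
qed

lemma charvecs_D:
  assumes "chi \<in> charvecs G n"
  shows "\<And>i. i \<in> {1..n} \<Longrightarrow> character G (chi i)"
    and "\<And>i. i \<notin> {1..n} \<Longrightarrow> chi i = (\<lambda>_. 0)"
    and "\<And>i. i \<in> {1..n} \<Longrightarrow> i \<notin> nontriv_coords G n chi \<Longrightarrow> chi i = trivial_char G"
  using assms unfolding charvecs_def nontriv_coords_def by auto

lemma nontriv_sub: "nontriv_coords G n chi \<subseteq> {1..n}"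
  unfolding nontriv_coords_def by auto

lemma char_determined:
  assumes "character G chi" "character G psi" "\<forall>x\<in>carrier G. chi x = psi x"
  shows "chi = psi"
  using assms unfolding character_def by (metis ext)

lemma KP_part_props:
  assumes "P \<in> KP G chi I" "p \<in> P"
  shows "p \<subseteq> I" "p \<noteq> {}" "\<And>x. x \<in> carrier G \<Longrightarrow> (\<Prod>k\<in>p. chi k x) = 1"
  using assms unfolding KP_def partition_on_def by auto

lemma KP_reps_eq:
  assumes chi: "chi \<in> charvecs G n" and psi: "psi \<in> charvecs G n"
    and N: "nontriv_coords G n chi = N" "nontriv_coords G n psi = N"
    and P1: "P \<in> KP G chi N" and P2: "P \<in> KP G psi N"
    and r: "\<forall>p\<in>P. r p \<in> p"
    and agree: "\<forall>i\<in>N - r ` P. chi i = psi i"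
  shows "chi = psi"
proof -
  have Nsub: "N \<subseteq> {1..n}" using N(1) nontriv_sub by metis
  have finN: "finite N" using Nsub finite_subset by blast
  have part: "partition_on N P" using P1 unfolding KP_def by auto
  have dis: "disjoint P" using part by (simp add: partition_on_def)
  have eqN: "chi i = psi i" if i: "i \<in> N" for i
  proof (cases "i \<in> r ` P")
    case False thus ?thesis using agree i by blast
  next
    case True
    then obtain p where p: "p \<in> P" "i = r p" by blast
    have ip: "i \<in> p" using r p by simp
    have pN: "p \<subseteq> N" using KP_part_props(1)[OF P1 p(1)] .
    have finp: "finite p" using pN finN finite_subset by blast
    have others: "chi k = psi k" if k: "k \<in> p - {i}" for k
    proof -
      have "k \<notin> r ` P"
      proof
        assume "k \<in> r ` P"
        then obtain q where q: "q \<in> P" "k = r q" by blast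
        have "k \<in> q" using r q by simp
        hence "q = p" using dis p(1) q(1) k by (meson DiffD1 disjointD disjoint_iff)
        thus False using q p k by simp
      qed
      thus ?thesis using agree k pN by blast
    qed
    have ci: "character G (chi i)" "character G (psi i)"
      using charvecs_D(1)[OF chi] charvecs_D(1)[OF psi] i Nsub by auto
    have "chi i x = psi i x" if x: "x \<in> carrier G" for x
    proof -
      have "chi i x * (\<Prod>k\<in>p - {i}. chi k x) = 1"
        using KP_part_props(3)[OF P1 p(1) x] ip finp by (simp add: prod.remove)
      moreover have "psi i x * (\<Prod>k\<in>p - {i}. chi k x) = 1"
        using KP_part_props(3)[OF P2 p(1) x] ip finp others by (simp add: prod.remove)
      ultimately show ?thesis by (metis mult_cancel_right mult_zero_left zero_neq_one)
    qed
    thus ?thesis using char_determined[OF ci] by blast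
  qed
  show ?thesis
  proof
    fix i show "chi i = psi i"
    proof (cases "i \<in> {1..n}")
      case False thus ?thesis using charvecs_D(2)[OF chi] charvecs_D(2)[OF psi] by simp
    next
      case True
      show ?thesis
      proof (cases "i \<in> N")
        case True thus ?thesis by (rule eqN)
      next
        case False
        thus ?thesis using charvecs_D(3)[OF chi] charvecs_D(3)[OF psi] N \<open>i \<in> {1..n}\<close> by simp
      qed
    qed
  qed
qed

lemma count_restrict:
  assumes G: "group G" "finite (carrier G)" and n: "n = card (carrier G)"
    and Y: "Y \<subseteq> charvecs G n" and F: "F \<subseteq> {1..n}"
    and inj: "inj_on (\<lambda>chi. restrict chi F) Y"
  shows "card Y \<le> n ^ card F"
proof -
  let ?Ch = "{chi. character G chi}"
  have Ch: "finite ?Ch" "card ?Ch \<le> n" using chars_finite_card[OF G] n by auto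
  have finF: "finite F" using F finite_subset by blast
  have sub: "(\<lambda>chi. restrict chi F) ` Y \<subseteq> (\<Pi>\<^sub>E i\<in>F. ?Ch)"
  proof
    fix f assume "f \<in> (\<lambda>chi. restrict chi F) ` Y"
    then obtain chi where chi: "chi \<in> Y" "f = restrict chi F" by blast
    have "\<forall>i\<in>F. chi i \<in> ?Ch" using chi(1) Y F charvecs_D(1)[of chi G n] by blast
    thus "f \<in> (\<Pi>\<^sub>E i\<in>F. ?Ch)" using chi(2) by (simp add: restrict_PiE_iff)
  qed
  have "card Y = card ((\<lambda>chi. restrict chi F) ` Y)" using inj by (simp add: card_image)
  also have "\<dots> \<le> card (\<Pi>\<^sub>E i\<in>F. ?Ch)"
    using sub finF Ch(1) by (intro card_mono) (auto simp: finite_PiE)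
  also have "\<dots> = card ?Ch ^ card F" using finF by (simp add: card_PiE)
  also have "\<dots> \<le> n ^ card F" using Ch(2) by (simp add: power_mono)
  finally show ?thesis .
qed

lemma restrict_agree: "restrict chi F = restrict psi F \<Longrightarrow> i \<in> F \<Longrightarrow> chi i = psi i"
  by (metis restrict_apply')

lemma reps_inj:
  assumes "disjoint P" "\<forall>p\<in>P. r p \<in> p"
  shows "inj_on r P"
  using assms unfolding inj_on_def by (metis disjointD disjoint_iff)

lemma count_KP:
  assumes G: "group G" "finite (carrier G)" and n: "n = card (carrier G)"
    and Nsub: "N \<subseteq> {1..n}" and part: "partition_on N P"
  shows "card {chi\<in>charvecs G n. nontriv_coords G n chi = N \<and> P \<in> KP G chi N} \<le> n ^ (card N - card P)"
proof -
  define r where "r p = (SOME x. x \<in> p)" for p :: "nat set"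
  have r: "\<forall>p\<in>P. r p \<in> p" using partition_onD3[OF part] unfolding r_def by (metis some_in_eq)
  have dis: "disjoint P" using part by (simp add: partition_on_def)
  have rinj: "inj_on r P" using reps_inj[OF dis r] .
  have rN: "r ` P \<subseteq> N" using r partition_onD1[OF part] by auto
  have finN: "finite N" using Nsub finite_subset by blast
  have finP: "finite P" using finite_elements[OF finN part] .
  have cF: "card (N - r ` P) = card N - card P"
    using rN finN rinj by (simp add: card_Diff_subset[OF finite_subset[OF rN finN] rN] card_image)
  let ?Y = "{chi\<in>charvecs G n. nontriv_coords G n chi = N \<and> P \<in> KP G chi N}"
  have "card ?Y \<le> n ^ card (N - r ` P)"
  proof (rule count_restrict[OF G n])
    show "?Y \<subseteq> charvecs G n" by blast
    show "N - r ` P \<subseteq> {1..n}" using Nsub by blast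
    show "inj_on (\<lambda>chi. restrict chi (N - r ` P)) ?Y"
    proof (rule inj_onI)
      fix chi psi assume a: "chi \<in> ?Y" "psi \<in> ?Y" and eq: "restrict chi (N - r ` P) = restrict psi (N - r ` P)"
      have ag: "\<forall>i\<in>N - r ` P. chi i = psi i" using restrict_agree[OF eq] by blast
      from a have "chi \<in> charvecs G n" "psi \<in> charvecs G n" "nontriv_coords G n chi = N" "nontriv_coords G n psi = N"
        "P \<in> KP G chi N" "P \<in> KP G psi N" by auto
      from KP_reps_eq[OF this r ag] show "chi = psi" .
    qed
  qed
  thus ?thesis using cF by simp
qed

lemma KP_part_ge2:
  assumes chi: "chi \<in> charvecs G n" and P: "P \<in> KP G chi (nontriv_coords G n chi)" and p: "p \<in> P"
  shows "2 \<le> card p"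
proof (rule ccontr)
  let ?N = "nontriv_coords G n chi"
  assume "\<not> 2 \<le> card p"
  moreover have "p \<noteq> {}" "p \<subseteq> ?N" using KP_part_props[OF P p] by auto
  moreover have "finite ?N" using nontriv_sub finite_subset by (metis finite_atLeastAtMost)
  ultimately have "finite p" "p \<noteq> {}" "\<not> 2 \<le> card p" using finite_subset by blast+
  hence "card p = 1" using card_gt_0_iff[of p] by linarith
  then obtain i where pi: "p = {i}" by (rule card_1_singletonE)
  have iN: "i \<in> ?N" using \<open>p \<subseteq> ?N\<close> pi by simp
  hence "i \<in> {1..n}" using nontriv_sub by blast
  hence ci: "character G (chi i)" using charvecs_D(1)[OF chi] by blast
  have "\<forall>x\<in>carrier G. chi i x = 1" using KP_part_props(3)[OF P p] pi by simp
  hence "chi i = trivial_char G" using char_eq_trivial[OF ci] by blast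
  thus False using iN unfolding nontriv_coords_def by simp
qed

lemma KP_card_bounds:
  assumes chi: "chi \<in> charvecs G n" and P: "P \<in> KP G chi (nontriv_coords G n chi)"
  shows "2 * card P \<le> card (nontriv_coords G n chi)"
    and "2 * card P = card (nontriv_coords G n chi) \<Longrightarrow> \<forall>p\<in>P. card p = 2"
proof -
  let ?N = "nontriv_coords G n chi"
  have finN: "finite ?N" using nontriv_sub finite_subset by (metis finite_atLeastAtMost)
  have part: "partition_on ?N P" using P unfolding KP_def by auto
  have finp: "\<And>p. p \<in> P \<Longrightarrow> finite p" using KP_part_props(1)[OF P] finN finite_subset by blast
  have finP: "finite P" using finite_elements[OF finN part] .
  have cN: "card ?N = (\<Sum>p\<in>P. card p)" using product_partition[OF part finp] .
  have ge: "\<And>p. p \<in> P \<Longrightarrow> 2 \<le> card p" using KP_part_ge2[OF chi P] .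
  have "(\<Sum>p\<in>P. 2) \<le> (\<Sum>p\<in>P. card p)" using ge by (rule sum_mono)
  thus "2 * card P \<le> card ?N" using cN by (simp add: mult.commute)
  assume eq: "2 * card P = card ?N"
  show "\<forall>p\<in>P. card p = 2"
  proof (rule ccontr)
    assume "\<not> (\<forall>p\<in>P. card p = 2)"
    then obtain p0 where "p0 \<in> P" "card p0 \<noteq> 2" by blast
    hence "2 < card p0" using ge by force
    hence "(\<Sum>p\<in>P. 2) < (\<Sum>p\<in>P. card p)"
      using finP ge \<open>p0 \<in> P\<close> by (intro sum_strict_mono_ex1) auto
    thus False using cN eq by (simp add: mult.commute)
  qed
qed

lemma partition_subset_eq:
  assumes "partition_on N P" "partition_on N Q" "P \<subseteq> Q"
  shows "P = Q"
proof
  show "Q \<subseteq> P"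
  proof
    fix q assume q: "q \<in> Q"
    then obtain x where x: "x \<in> q" using partition_onD3[OF assms(2)] by (metis ex_in_conv)
    hence "x \<in> N" using q partition_onD1[OF assms(2)] by blast
    then obtain p where p: "p \<in> P" "x \<in> p" using partition_onD1[OF assms(1)] by blast
    have "p \<in> Q" using p assms(3) by blast
    hence "p = q" using partition_onD2[OF assms(2)] q p x by (meson disjointD disjoint_iff)
    thus "q \<in> P" using p by simp
  qed
qed (rule assms(3))

lemma card2_other:
  assumes "card q = 2" "a \<in> q"
  obtains c where "q = {a, c}" "a \<noteq> c"
proof -
  have "card (q - {a}) = 1" using assms by (simp add: card_Diff_singleton)
  then obtain c where c: "q - {a} = {c}" by (rule card_1_singletonE)
  hence "q = {a, c}" "a \<noteq> c" using assms(2) by auto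
  thus ?thesis using that by blast
qed

lemma count_pairs:
  assumes G: "group G" "finite (carrier G)" and n: "n = card (carrier G)"
    and Nsub: "N \<subseteq> {1..n}" and partP: "partition_on N P" and partQ: "partition_on N Q"
    and PQ: "P \<noteq> Q" and c2P: "\<forall>p\<in>P. card p = 2" and c2Q: "\<forall>q\<in>Q. card q = 2"
    and cN: "card N = 2 * card P"
  shows "card {chi\<in>charvecs G n. nontriv_coords G n chi = N \<and> P \<in> KP G chi N \<and> Q \<in> KP G chi N}
          \<le> n ^ (card P - 1)"
proof -
  have finN: "finite N" using Nsub finite_subset by blast
  have disP: "disjoint P" using partP by (simp add: partition_on_def)
  have same: "x = y" if "x \<in> P" "y \<in> P" "z \<in> x" "z \<in> y" for x y z
    using disP that by (meson disjointD disjoint_iff)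
  obtain p where p: "p \<in> P" "p \<notin> Q" using PQ partition_subset_eq[OF partP partQ] by blast
  obtain a b where ab: "p = {a, b}" "a \<noteq> b" using c2P p(1) by (meson card_2_iff)
  have aN: "a \<in> N" using p(1) ab partition_onD1[OF partP] by blast
  then obtain q where q: "q \<in> Q" "a \<in> q" using partition_onD1[OF partQ] by blast
  obtain c where c: "q = {a, c}" "a \<noteq> c" using card2_other[of q a] c2Q q by blast
  have cb: "c \<noteq> b" using c q p ab by (metis insert_commute)
  have cN': "c \<in> N" using q c partition_onD1[OF partQ] by blast
  then obtain p' where p': "p' \<in> P" "c \<in> p'" using partition_onD1[OF partP] by blast
  have pp': "p' \<noteq> p" using p' ab c cb by auto
  obtain d where d: "p' = {c, d}" "c \<noteq> d" using card2_other[of p' c] c2P p' by blast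
  define r where "r x = (if x = p then b else if x = p' then d else (SOME y. y \<in> x))" for x :: "nat set"
  have r: "\<forall>x\<in>P. r x \<in> x"
  proof
    fix x assume x: "x \<in> P"
    show "r x \<in> x"
    proof (cases "x = p \<or> x = p'")
      case True
      have "r p = b" "r p' = d" using pp' unfolding r_def by simp_all
      thus ?thesis using True ab d by auto
    next
      case False
      have "x \<noteq> {}" using x partition_onD3[OF partP] by blast
      thus ?thesis using False unfolding r_def by (simp add: some_in_eq)
    qed
  qed
  have rinj: "inj_on r P" using reps_inj[OF disP r] .
  have rN: "r ` P \<subseteq> N" using r partition_onD1[OF partP] by auto
  have finP: "finite P" using finite_elements[OF finN partP] .
  have cnr: "c \<notin> r ` P"
  proof
    assume "c \<in> r ` P"
    then obtain x where x: "x \<in> P" "c = r x" by blast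
    have "c \<in> x" using r x by auto
    hence "x = p'" using same[OF x(1) p'(1) _ p'(2)] by blast
    moreover have "r p' = d" using pp' unfolding r_def by simp
    ultimately show False using x d by simp
  qed
  have anr: "a \<notin> r ` P"
  proof
    assume "a \<in> r ` P"
    then obtain x where x: "x \<in> P" "a = r x" by blast
    have "a \<in> x" using r x by auto
    moreover have "a \<in> p" using ab by simp
    ultimately have "x = p" using same[OF x(1) p(1)] by blast
    moreover have "r p = b" unfolding r_def by simp
    ultimately show False using x ab by simp
  qed
  let ?F = "N - r ` P - {c}"
  have cF: "card ?F = card P - 1"
  proof -
    have "card (N - r ` P) = card N - card P"
      using rN finN rinj by (simp add: card_Diff_subset[OF finite_subset[OF rN finN] rN] card_image)
    moreover have "c \<in> N - r ` P" using cN' cnr by blast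
    ultimately have "card ?F = card N - card P - 1" using finN by (simp add: card_Diff_singleton)
    thus ?thesis using cN by simp
  qed
  have aF: "a \<in> ?F" using aN anr c by blast
  let ?Y = "{chi\<in>charvecs G n. nontriv_coords G n chi = N \<and> P \<in> KP G chi N \<and> Q \<in> KP G chi N}"
  have "card ?Y \<le> n ^ card ?F"
  proof (rule count_restrict[OF G n])
    show "?Y \<subseteq> charvecs G n" by blast
    show "?F \<subseteq> {1..n}" using Nsub by blast
    show "inj_on (\<lambda>chi. restrict chi ?F) ?Y"
    proof (rule inj_onI)
      fix chi psi assume a: "chi \<in> ?Y" "psi \<in> ?Y" and eq: "restrict chi ?F = restrict psi ?F"
      have ag: "\<forall>i\<in>?F. chi i = psi i" using restrict_agree[OF eq] by blast
      from a have h: "chi \<in> charvecs G n" "psi \<in> charvecs G n" "nontriv_coords G n chi = N" "nontriv_coords G n psi = N"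
        "P \<in> KP G chi N" "P \<in> KP G psi N" "Q \<in> KP G chi N" "Q \<in> KP G psi N" by auto
      have cc: "chi c = psi c"
      proof -
        have c1: "character G (chi c)" "character G (psi c)"
          using charvecs_D(1)[OF h(1)] charvecs_D(1)[OF h(2)] cN' Nsub by auto
        have "chi c x = psi c x" if x: "x \<in> carrier G" for x
        proof -
          have "chi a x * chi c x = 1" using KP_part_props(3)[OF h(7) q(1) x] c by simp
          moreover have "psi a x * psi c x = 1" using KP_part_props(3)[OF h(8) q(1) x] c by simp
          moreover have "chi a = psi a" using ag aF by blast
          ultimately show ?thesis by (metis mult_cancel_left mult_zero_left zero_neq_one)
        qed
        thus ?thesis using char_determined[OF c1] by blast
      qed
      have ag2: "\<forall>i\<in>N - r ` P. chi i = psi i" using ag cc by blast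
      from KP_reps_eq[OF h(1-6) r ag2] show "chi = psi" .
    qed
  qed
  thus ?thesis using cF by simp
qed

lemma kills_KP: "kills G n P chi \<longleftrightarrow> P \<in> KP G chi (nontriv_coords G n chi)"
  unfolding kills_def KP_def by simp

lemma finite_charvecs:
  assumes G: "group G" "finite (carrier G)"
  shows "finite (charvecs G n)"
proof -
  let ?Ch = "{chi. character G chi}"
  have Ch: "finite ?Ch" using chars_finite_card[OF G] by auto
  have inj: "inj_on (\<lambda>chi. restrict chi {1..n}) (charvecs G n)"
  proof (rule inj_onI)
    fix chi psi assume a: "chi \<in> charvecs G n" "psi \<in> charvecs G n"
      and eq: "restrict chi {1..n} = restrict psi {1..n}"
    show "chi = psi"
    proof
      fix i show "chi i = psi i"
        using restrict_agree[OF eq, of i] charvecs_D(2)[OF a(1), of i] charvecs_D(2)[OF a(2), of i]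
        by (cases "i \<in> {1..n}") auto
    qed
  qed
  have sub: "(\<lambda>chi. restrict chi {1..n}) ` charvecs G n \<subseteq> (\<Pi>\<^sub>E i\<in>{1..n}. ?Ch)"
  proof
    fix f assume "f \<in> (\<lambda>chi. restrict chi {1..n}) ` charvecs G n"
    then obtain chi where chi: "chi \<in> charvecs G n" "f = restrict chi {1..n}" by blast
    have "\<forall>i\<in>{1..n}. chi i \<in> ?Ch" using charvecs_D(1)[OF chi(1)] by blast
    thus "f \<in> (\<Pi>\<^sub>E i\<in>{1..n}. ?Ch)" using chi(2) by (simp add: restrict_PiE_iff)
  qed
  have "finite ((\<lambda>chi. restrict chi {1..n}) ` charvecs G n)"
    using sub Ch by (rule finite_subset[OF _ finite_PiE[OF finite_atLeastAtMost]]) 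
  thus ?thesis using inj by (rule finite_imageD)
qed

lemma partition_empty_card:
  assumes "partition_on N P" "finite N" "card P = 0"
  shows "P = {}" "N = {}"
proof -
  have "finite P" using finite_elements[OF assms(2,1)] .
  thus "P = {}" using assms(3) by simp
  thus "N = {}" using partition_onD1[OF assms(1)] by simp
qed

lemma term_bound:
  assumes G: "group G" "finite (carrier G)" and n: "n = card (carrier G)"
    and Nsub: "N \<subseteq> {1..n}" and cN: "card N = m"
  shows "n ^ (3 * card P) * card {chi\<in>{chi\<in>charvecs G n. sparse G n m chi \<and> chi \<notin> frakM G n m}.
            nontriv_coords G n chi = N \<and> P \<in> KP G chi N} * n
         \<le> 2 ^ (2 ^ m) * n ^ (2 * m)"
proof -
  let ?X = "{chi\<in>{chi\<in>charvecs G n. sparse G n m chi \<and> chi \<notin> frakM G n m}.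
            nontriv_coords G n chi = N \<and> P \<in> KP G chi N}"
  have finC: "finite (charvecs G n)" using finite_charvecs[OF G] .
  have finN: "finite N" using Nsub finite_subset by blast
  have n1: "1 \<le> n"
  proof -
    have "\<one>\<^bsub>G\<^esub> \<in> carrier G" using G(1) by (simp add: group.is_monoid monoid.one_closed)
    hence "carrier G \<noteq> {}" by blast
    thus ?thesis using n G(2) by (simp add: Suc_leI card_gt_0_iff)
  qed
  show ?thesis
  proof (cases "?X = {}")
    case True
    hence "card ?X = 0" by (simp only: card.empty)
    thus ?thesis by (simp only: mult_0_right mult_0 zero_le)
  next
    case False
    note Xne = this
    then obtain chi0 where chi0: "chi0 \<in> charvecs G n" "nontriv_coords G n chi0 = N" "P \<in> KP G chi0 N" by blast
    have partP: "partition_on N P" using chi0(3) unfolding KP_def by auto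
    have le: "2 * card P \<le> m" using KP_card_bounds(1)[of chi0 G n P] chi0 cN by simp
    show ?thesis
    proof (cases "2 * card P < m")
      case True
      have "card ?X \<le> card {chi\<in>charvecs G n. nontriv_coords G n chi = N \<and> P \<in> KP G chi N}"
        using finC by (intro card_mono) auto
      also have "\<dots> \<le> n ^ (m - card P)" using count_KP[OF G n Nsub partP] cN by simp
      finally have "n ^ (3 * card P) * card ?X * n \<le> n ^ (3 * card P) * n ^ (m - card P) * n"
        by (simp add: mult_le_mono)
      also have "\<dots> = n ^ (3 * card P + (m - card P) + 1)" by (simp add: power_add)
      also have "\<dots> \<le> n ^ (2 * m)" using n1 True by (intro power_increasing) auto
      also have "\<dots> \<le> 2 ^ (2 ^ m) * n ^ (2 * m)" by simp
      finally show ?thesis .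
    next
      case False
      hence eq: "2 * card P = m" using le by simp
      have c2P: "\<forall>p\<in>P. card p = 2" using KP_card_bounds(2)[of chi0 G n P] chi0 cN eq by simp
      let ?Qs = "{Q\<in>Pow (Pow N). Q \<noteq> P \<and> partition_on N Q \<and> (\<forall>q\<in>Q. card q = 2)}"
      let ?Y = "\<lambda>Q. {chi\<in>charvecs G n. nontriv_coords G n chi = N \<and> P \<in> KP G chi N \<and> Q \<in> KP G chi N}"
      have sub: "?X \<subseteq> (\<Union>Q\<in>?Qs. ?Y Q)"
      proof
        fix chi assume chi: "chi \<in> ?X"
        hence c: "chi \<in> charvecs G n" "sparse G n m chi" "chi \<notin> frakM G n m"
          "nontriv_coords G n chi = N" "P \<in> KP G chi N" by auto
        have "\<not> (\<exists>!Q. kills G n Q chi \<and> 2 * card Q = m)" using c(1-3) unfolding frakM_def by blast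
        moreover have "kills G n P chi \<and> 2 * card P = m" using c(4,5) eq kills_KP by metis
        ultimately obtain Q where Q: "kills G n Q chi" "2 * card Q = m" "Q \<noteq> P" by blast
        have QK: "Q \<in> KP G chi N" using Q(1) c(4) kills_KP by metis
        have "\<forall>q\<in>Q. card q = 2" using KP_card_bounds(2)[of chi G n Q] c(1,4) QK Q(2) cN by simp
        moreover have "partition_on N Q" using QK unfolding KP_def by auto
        moreover hence "Q \<in> Pow (Pow N)" unfolding partition_on_def by auto
        ultimately have "Q \<in> ?Qs" using Q(3) by blast
        thus "chi \<in> (\<Union>Q\<in>?Qs. ?Y Q)" using c QK by blast
      qed
      have finQs: "finite ?Qs" using finN by simp
      have cQs: "card ?Qs \<le> 2 ^ (2 ^ m)"
      proof -
        have "card ?Qs \<le> card (Pow (Pow N))" using finN by (intro card_mono) auto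
        also have "\<dots> = 2 ^ (2 ^ m)" using finN cN by (simp add: card_Pow)
        finally show ?thesis .
      qed
      have P1: "1 \<le> card P"
      proof (rule ccontr)
        assume "\<not> 1 \<le> card P"
        hence "card P = 0" by simp
        hence PN: "P = {}" "N = {}" using partition_empty_card[OF partP finN] by auto
        obtain x where "x \<in> ?X" using Xne by blast
        hence "x \<in> (\<Union>Q\<in>?Qs. ?Y Q)" using sub by (rule subsetD[rotated])
        then obtain Q where "Q \<in> ?Qs" by blast
        hence "partition_on {} Q" "Q \<noteq> {}" using PN by auto
        thus False by (simp add: partition_on_empty)
      qed
      have "finite (\<Union>Q\<in>?Qs. ?Y Q)" by (rule finite_subset[OF _ finC]) blast
      hence "card ?X \<le> card (\<Union>Q\<in>?Qs. ?Y Q)"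
        using sub by (intro card_mono)
      also have "\<dots> \<le> (\<Sum>Q\<in>?Qs. card (?Y Q))" by (rule card_UN_le[OF finQs])
      also have "\<dots> \<le> (\<Sum>Q\<in>?Qs. n ^ (card P - 1))"
      proof (rule sum_mono)
        fix Q assume "Q \<in> ?Qs"
        thus "card (?Y Q) \<le> n ^ (card P - 1)"
          using count_pairs[OF G n Nsub partP _ _ c2P] eq cN by auto
      qed
      also have "\<dots> = card ?Qs * n ^ (card P - 1)" by simp
      also have "\<dots> \<le> 2 ^ (2 ^ m) * n ^ (card P - 1)" using cQs by (simp add: mult_le_mono1)
      finally have "n ^ (3 * card P) * card ?X * n \<le> n ^ (3 * card P) * (2 ^ (2 ^ m) * n ^ (card P - 1)) * n"
        by (simp add: mult_le_mono)
      also have "\<dots> = 2 ^ (2 ^ m) * n ^ (3 * card P + (card P - 1) + 1)" by (simp add: power_add mult_ac)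
      also have "3 * card P + (card P - 1) + 1 = 2 * m" using P1 eq by simp
      finally show ?thesis .
    qed
  qed
qed

lemma fact_split: "m \<le> n \<Longrightarrow> fact n = fact (n - m) * (\<Prod>k<m. (n - k :: nat))"
proof (induction m)
  case 0 thus ?case by simp
next
  case (Suc m)
  have e: "n - m = Suc (n - Suc m)" using Suc.prems by simp
  have "(fact (n - m) :: nat) = fact (Suc (n - Suc m))" using e by (simp only:)
  also have "\<dots> = Suc (n - Suc m) * fact (n - Suc m)" by (simp only: fact_Suc of_nat_id)
  also have "Suc (n - Suc m) = n - m" using e by simp
  finally have "(fact (n - m) :: nat) = (n - m) * fact (n - Suc m)" .
  thus ?case using Suc by (simp add: mult_ac)
qed

lemma FF:
  assumes "m \<le> n"
  shows "real n ^ m * fact (n - m) \<le> real m ^ m * fact n"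
proof -
  have key: "n \<le> m * (n - k)" if k: "k < m" for k
  proof -
    have "(k + 1) * (n - k) \<le> m * (n - k)" using k by (intro mult_le_mono1) simp
    moreover have "n \<le> (k + 1) * (n - k)"
    proof -
      have "1 \<le> n - k" using k assms by simp
      hence "k * 1 \<le> k * (n - k)" by (rule mult_le_mono2)
      moreover have "(k + 1) * (n - k) = (n - k) + k * (n - k)" by simp
      moreover have "k < n" using k assms by simp
      ultimately show ?thesis by linarith
    qed
    ultimately show ?thesis by linarith
  qed
  have "real n ^ m = (\<Prod>k<m. real n)" by simp
  also have "\<dots> \<le> (\<Prod>k<m. real m * real (n - k))"
    using key by (intro prod_mono) (auto simp flip: of_nat_mult)
  also have "\<dots> = real m ^ m * real (\<Prod>k<m. (n - k))" by (simp add: prod.distrib)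
  finally have h: "real n ^ m \<le> real m ^ m * real (\<Prod>k<m. (n - k))" .
  have "real n ^ m * fact (n - m) \<le> real m ^ m * real (\<Prod>k<m. (n - k)) * fact (n - m)"
    using h by (intro mult_right_mono) auto
  also have "\<dots> = real m ^ m * fact n"
  proof -
    have "(fact n :: real) = real (fact (n - m) * (\<Prod>k<m. n - k))" using fact_split[OF assms] by (metis of_nat_fact)
    also have "\<dots> = fact (n - m) * real (\<Prod>k<m. n - k)" by (simp only: of_nat_mult of_nat_fact)
    finally show ?thesis by (simp only: mult_ac)
  qed
  finally show ?thesis .
qed

lemma cube_sum:
  fixes a :: "'b \<Rightarrow> real"
  assumes "finite K" "\<And>x. x \<in> K \<Longrightarrow> 0 \<le> a x"
  shows "(\<Sum>x\<in>K. a x) ^ 3 \<le> real (card K) ^ 3 * (\<Sum>x\<in>K. a x ^ 3)"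
proof (cases "K = {}")
  case True thus ?thesis by simp
next
  case False
  define M where "M = Max (a ` K)"
  have MK: "M \<in> a ` K" unfolding M_def using assms(1) False by simp
  have le: "a x \<le> M" if "x \<in> K" for x unfolding M_def using assms(1) that by simp
  have M0: "0 \<le> M" using MK assms(2) by auto
  have "(\<Sum>x\<in>K. a x) \<le> real (card K) * M" using sum_bounded_above[of K a M] le by simp
  hence "(\<Sum>x\<in>K. a x) ^ 3 \<le> (real (card K) * M) ^ 3"
    using assms(2) by (intro power_mono) (auto simp: sum_nonneg)
  also have "\<dots> = real (card K) ^ 3 * M ^ 3" by (simp add: power_mult_distrib)
  also have "M ^ 3 \<le> (\<Sum>x\<in>K. a x ^ 3)"
  proof -
    obtain x where x: "x \<in> K" "M = a x" using MK by blast
    show ?thesis using x assms by (auto intro!: member_le_sum)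
  qed
  hence "real (card K) ^ 3 * M ^ 3 \<le> real (card K) ^ 3 * (\<Sum>x\<in>K. a x ^ 3)"
    by (intro mult_left_mono) auto
  finally show ?thesis .
qed

lemma T_bound:
  fixes m :: nat
  assumes G: "group G" "finite (carrier G)" and n: "n = card (carrier G)"
  defines "Bad \<equiv> {chi\<in>charvecs G n. sparse G n m chi \<and> chi \<notin> frakM G n m}"
  shows "(\<Sum>chi\<in>Bad. \<Sum>P\<in>KP G chi (nontriv_coords G n chi). n ^ (3 * card P)) * n
          \<le> 2 ^ (2 ^ m) * 2 ^ (2 ^ m) * n ^ (3 * m)"
proof -
  define Ns where "Ns = {N. N \<subseteq> {1..n} \<and> card N = m}"
  define f where "f P = n ^ (3 * card P)" for P :: "nat set set"
  have finNs: "finite Ns" unfolding Ns_def by (rule finite_subset[of _ "Pow {1..n}"]) auto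
  have finN: "\<And>N. N \<in> Ns \<Longrightarrow> finite N" unfolding Ns_def using finite_subset by blast
  have finBad: "finite Bad" unfolding Bad_def using finite_charvecs[OF G] by simp
  have step1: "(\<Sum>P\<in>KP G chi (nontriv_coords G n chi). f P)
     = (\<Sum>N\<in>Ns. \<Sum>P\<in>Pow (Pow N). if nontriv_coords G n chi = N \<and> P \<in> KP G chi N then f P else 0)"
    if chi: "chi \<in> Bad" for chi
  proof -
    let ?N0 = "nontriv_coords G n chi"
    have N0: "?N0 \<in> Ns" using chi nontriv_sub unfolding Ns_def Bad_def sparse_def by auto
    have "(\<Sum>N\<in>Ns. \<Sum>P\<in>Pow (Pow N). if ?N0 = N \<and> P \<in> KP G chi N then f P else 0)
        = (\<Sum>N\<in>Ns. if N = ?N0 then (\<Sum>P\<in>Pow (Pow N). if P \<in> KP G chi N then f P else 0) else 0)"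
      by (intro sum.cong refl) auto
    also have "\<dots> = (\<Sum>P\<in>Pow (Pow ?N0). if P \<in> KP G chi ?N0 then f P else 0)"
      using finNs N0 by (simp add: sum.delta')
    also have "\<dots> = (\<Sum>P\<in>{P\<in>Pow (Pow ?N0). P \<in> KP G chi ?N0}. f P)"
      using finN[OF N0] by (intro sum.inter_filter[symmetric]) simp
    also have "{P\<in>Pow (Pow ?N0). P \<in> KP G chi ?N0} = KP G chi ?N0"
      unfolding KP_def partition_on_def by auto
    finally show ?thesis by simp
  qed
  have "(\<Sum>chi\<in>Bad. \<Sum>P\<in>KP G chi (nontriv_coords G n chi). f P)
      = (\<Sum>chi\<in>Bad. \<Sum>N\<in>Ns. \<Sum>P\<in>Pow (Pow N). if nontriv_coords G n chi = N \<and> P \<in> KP G chi N then f P else 0)"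
    using step1 by (rule sum.cong[OF refl])
  also have "\<dots> = (\<Sum>N\<in>Ns. \<Sum>chi\<in>Bad. \<Sum>P\<in>Pow (Pow N). if nontriv_coords G n chi = N \<and> P \<in> KP G chi N then f P else 0)"
    by (rule sum.swap)
  also have "\<dots> = (\<Sum>N\<in>Ns. \<Sum>P\<in>Pow (Pow N). \<Sum>chi\<in>Bad. if nontriv_coords G n chi = N \<and> P \<in> KP G chi N then f P else 0)"
    by (intro sum.cong refl sum.swap)
  also have "\<dots> = (\<Sum>N\<in>Ns. \<Sum>P\<in>Pow (Pow N). f P * card {chi\<in>Bad. nontriv_coords G n chi = N \<and> P \<in> KP G chi N})"
  proof (intro sum.cong refl)
    fix N P
    show "(\<Sum>chi\<in>Bad. if nontriv_coords G n chi = N \<and> P \<in> KP G chi N then f P else 0)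
        = f P * card {chi\<in>Bad. nontriv_coords G n chi = N \<and> P \<in> KP G chi N}"
      using finBad by (simp add: sum.inter_filter[symmetric] mult.commute)
  qed
  finally have eqT: "(\<Sum>chi\<in>Bad. \<Sum>P\<in>KP G chi (nontriv_coords G n chi). f P)
     = (\<Sum>N\<in>Ns. \<Sum>P\<in>Pow (Pow N). f P * card {chi\<in>Bad. nontriv_coords G n chi = N \<and> P \<in> KP G chi N})" .
  have "(\<Sum>N\<in>Ns. \<Sum>P\<in>Pow (Pow N). f P * card {chi\<in>Bad. nontriv_coords G n chi = N \<and> P \<in> KP G chi N}) * n
     = (\<Sum>N\<in>Ns. \<Sum>P\<in>Pow (Pow N). f P * card {chi\<in>Bad. nontriv_coords G n chi = N \<and> P \<in> KP G chi N} * n)"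
    by (simp add: sum_distrib_right)
  also have "\<dots> \<le> (\<Sum>N\<in>Ns. \<Sum>P\<in>Pow (Pow N). 2 ^ (2 ^ m) * n ^ (2 * m))"
  proof (intro sum_mono)
    fix N P assume N: "N \<in> Ns"
    show "f P * card {chi\<in>Bad. nontriv_coords G n chi = N \<and> P \<in> KP G chi N} * n \<le> 2 ^ (2 ^ m) * n ^ (2 * m)"
      using term_bound[OF G n, of N m P] N unfolding Ns_def Bad_def f_def by simp
  qed
  also have "\<dots> = (\<Sum>N\<in>Ns. 2 ^ (2 ^ m) * (2 ^ (2 ^ m) * n ^ (2 * m)))"
  proof (intro sum.cong refl)
    fix N assume N: "N \<in> Ns"
    have "card (Pow (Pow N)) = 2 ^ (2 ^ m)" using N finN[OF N] unfolding Ns_def by (simp add: card_Pow)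
    thus "(\<Sum>P\<in>Pow (Pow N). 2 ^ (2 ^ m) * n ^ (2 * m)) = 2 ^ (2 ^ m) * (2 ^ (2 ^ m) * n ^ (2 * m))" by simp
  qed
  also have "\<dots> = card Ns * (2 ^ (2 ^ m) * (2 ^ (2 ^ m) * n ^ (2 * m)))" by simp
  also have "\<dots> \<le> n ^ m * (2 ^ (2 ^ m) * (2 ^ (2 ^ m) * n ^ (2 * m)))"
  proof (rule mult_le_mono1)
    have "card Ns = n choose m" unfolding Ns_def using n_subsets[of "{1..n}" m] by simp
    thus "card Ns \<le> n ^ m"
      by (cases "m \<le> n") (auto simp: binomial_le_pow binomial_eq_0)
  qed
  also have "\<dots> = 2 ^ (2 ^ m) * 2 ^ (2 ^ m) * n ^ (3 * m)" by (simp add: power_add[symmetric] mult_ac)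
  finally show ?thesis using eqT unfolding f_def by simp
qed

lemma chi_bound:
  assumes G: "group G" "finite (carrier G)" and n: "n = card (carrier G)"
    and chi: "chi \<in> charvecs G n" and cN: "card (nontriv_coords G n chi) = m"
  shows "real n ^ (3 * m) * cmod (hat1S G n chi) ^ 3 \<le>
     (fact n / real n ^ n) ^ 3 * ((real m ^ m * fact m) ^ 3 * (2 ^ (2 ^ m)) ^ 3) *
     real (\<Sum>P\<in>KP G chi (nontriv_coords G n chi). n ^ (3 * card P))"
proof -
  let ?N = "nontriv_coords G n chi"
  let ?K = "KP G chi ?N"
  let ?A = "(\<Sum>P\<in>?K. real n ^ card P)"
  have Nsub: "?N \<subseteq> {1..n}" by (rule nontriv_sub)
  have finN: "finite ?N" using Nsub finite_subset by blast
  have mn: "m \<le> n" using card_mono[OF _ Nsub] cN by simp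
  have chN: "\<forall>i\<in>?N. character G (chi i)" using charvecs_D(1)[OF chi] Nsub by blast
  have finK: "finite ?K" using KP_finite[OF finN] .
  have cK: "card ?K \<le> 2 ^ (2 ^ m)"
  proof -
    have "card ?K \<le> card (Pow (Pow ?N))" using finN by (intro card_mono) (auto simp: KP_def partition_on_def)
    also have "\<dots> = 2 ^ (2 ^ m)" using finN cN by (simp add: card_Pow)
    finally show ?thesis .
  qed
  have A0: "0 \<le> ?A" by (simp add: sum_nonneg)
  have h: "hat1S G n chi = (fact (n - m) / of_nat n ^ n) * Ssum G chi ?N"
    using hat_eq[OF G n chi] cN by simp
  have "cmod (hat1S G n chi) = fact (n - m) / real n ^ n * cmod (Ssum G chi ?N)"
    unfolding h by (simp add: norm_mult norm_divide norm_power)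
  also have "\<dots> \<le> fact (n - m) / real n ^ n * (fact m * ?A)"
    using Ssum_bound[OF G finN chN] cN by (intro mult_left_mono) (auto simp: n)
  finally have h1: "cmod (hat1S G n chi) \<le> fact (n - m) / real n ^ n * (fact m * ?A)" .
  have "real n ^ m * cmod (hat1S G n chi) \<le> real n ^ m * (fact (n - m) / real n ^ n * (fact m * ?A))"
    using h1 by (intro mult_left_mono) auto
  also have "\<dots> = (real n ^ m * fact (n - m)) * (fact m * ?A) / real n ^ n" by simp
  also have "\<dots> \<le> (real m ^ m * fact n) * (fact m * ?A) / real n ^ n"
    using FF[OF mn] A0 by (intro divide_right_mono mult_right_mono) auto
  also have "\<dots> = fact n / real n ^ n * (real m ^ m * fact m) * ?A" by simp
  finally have h2: "real n ^ m * cmod (hat1S G n chi) \<le> fact n / real n ^ n * (real m ^ m * fact m) * ?A" .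
  have "real n ^ (3 * m) * cmod (hat1S G n chi) ^ 3 = (real n ^ m * cmod (hat1S G n chi)) ^ 3"
    by (simp add: power_mult_distrib power_mult mult.commute)
  also have "\<dots> \<le> (fact n / real n ^ n * (real m ^ m * fact m) * ?A) ^ 3"
    using h2 by (intro power_mono) auto
  also have "\<dots> = (fact n / real n ^ n) ^ 3 * (real m ^ m * fact m) ^ 3 * ?A ^ 3"
    by (simp only: power_mult_distrib)
  finally have h3: "real n ^ (3 * m) * cmod (hat1S G n chi) ^ 3 \<le> (fact n / real n ^ n) ^ 3 * (real m ^ m * fact m) ^ 3 * ?A ^ 3" .
  have "?A ^ 3 \<le> real (card ?K) ^ 3 * (\<Sum>P\<in>?K. (real n ^ card P) ^ 3)"
    using cube_sum[OF finK] by simp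
  also have "\<dots> \<le> (2 ^ (2 ^ m)) ^ 3 * (\<Sum>P\<in>?K. (real n ^ card P) ^ 3)"
  proof (intro mult_right_mono power_mono)
    show "real (card ?K) \<le> 2 ^ 2 ^ m" using cK by (metis of_nat_le_iff of_nat_numeral of_nat_power)
  qed (auto simp: sum_nonneg)
  also have "(\<Sum>P\<in>?K. (real n ^ card P) ^ 3) = real (\<Sum>P\<in>?K. n ^ (3 * card P))"
    by (simp add: power_mult[symmetric] mult.commute)
  finally have A3: "?A ^ 3 \<le> (2 ^ (2 ^ m)) ^ 3 * real (\<Sum>P\<in>?K. n ^ (3 * card P))" .
  have "(fact n / real n ^ n) ^ 3 * (real m ^ m * fact m) ^ 3 * ?A ^ 3 \<le>
        (fact n / real n ^ n) ^ 3 * (real m ^ m * fact m) ^ 3 * ((2 ^ (2 ^ m)) ^ 3 * real (\<Sum>P\<in>?K. n ^ (3 * card P)))"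
    using A3 by (intro mult_left_mono) auto
  with h3 show ?thesis by (simp only: mult_ac)
qed

theorem lemma3p2:
  fixes m :: nat
  shows "\<exists>C::real. \<forall>G :: nat monoid. comm_group G \<and> finite (carrier G) \<longrightarrow>
     (let n = card (carrier G) in
       (\<Sum>chi\<in>{chi\<in>charvecs G n. sparse G n m chi \<and> chi \<notin> frakM G n m}.
           cmod (hat1S G n chi) ^ 3)
       \<le> C * ((1 / real n) * (fact n / real n ^ n) ^ 3))"
proof -
  define D :: real where "D = (real m ^ m * fact m) ^ 3 * (2 ^ (2 ^ m)) ^ 3"
  define E :: real where "E = 2 ^ (2 ^ m) * 2 ^ (2 ^ m)"
  have D0: "0 \<le> D" unfolding D_def by simp
  show ?thesis
  proof (intro exI[of _ "D * E"] allI impI)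
    fix G :: "nat monoid"
    assume a: "comm_group G \<and> finite (carrier G)"
    have G: "group G" "finite (carrier G)" using a by (auto dest: comm_group.axioms(2))
    define n where "n = card (carrier G)"
    define Bad where "Bad = {chi\<in>charvecs G n. sparse G n m chi \<and> chi \<notin> frakM G n m}"
    define fn :: real where "fn = fact n / real n ^ n"
    have n1: "1 \<le> n"
    proof -
      have "\<one>\<^bsub>G\<^esub> \<in> carrier G" using G(1) by (simp add: group.is_monoid monoid.one_closed)
      hence "carrier G \<noteq> {}" by blast
      thus ?thesis using n_def G(2) by (simp add: Suc_leI card_gt_0_iff)
    qed
    have finBad: "finite Bad" unfolding Bad_def using finite_charvecs[OF G] by simp
    let ?T = "(\<Sum>chi\<in>Bad. \<Sum>P\<in>KP G chi (nontriv_coords G n chi). n ^ (3 * card P))"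
    have "real n ^ (3 * m) * (\<Sum>chi\<in>Bad. cmod (hat1S G n chi) ^ 3)
        = (\<Sum>chi\<in>Bad. real n ^ (3 * m) * cmod (hat1S G n chi) ^ 3)" by (simp add: sum_distrib_left)
    also have "\<dots> \<le> (\<Sum>chi\<in>Bad. fn ^ 3 * D * real (\<Sum>P\<in>KP G chi (nontriv_coords G n chi). n ^ (3 * card P)))"
    proof (rule sum_mono)
      fix chi assume "chi \<in> Bad"
      hence "chi \<in> charvecs G n" "card (nontriv_coords G n chi) = m" unfolding Bad_def sparse_def by auto
      from chi_bound[OF G n_def this] show "real n ^ (3 * m) * cmod (hat1S G n chi) ^ 3 \<le>
          fn ^ 3 * D * real (\<Sum>P\<in>KP G chi (nontriv_coords G n chi). n ^ (3 * card P))"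
        unfolding fn_def D_def by simp
    qed
    also have "\<dots> = fn ^ 3 * D * real ?T" by (simp add: sum_distrib_left)
    finally have s1: "real n ^ (3 * m) * (\<Sum>chi\<in>Bad. cmod (hat1S G n chi) ^ 3) \<le> fn ^ 3 * D * real ?T" .
    have "real ?T * real n \<le> E * real n ^ (3 * m)"
    proof -
      have "?T * n \<le> 2 ^ (2 ^ m) * 2 ^ (2 ^ m) * n ^ (3 * m)"
        using T_bound[OF G n_def, of m] unfolding Bad_def by simp
      hence "real (?T * n) \<le> real (2 ^ (2 ^ m) * 2 ^ (2 ^ m) * n ^ (3 * m))" by (simp only: of_nat_le_iff)
      thus ?thesis unfolding E_def by simp
    qed
    hence "real n ^ (3 * m) * (real n * (\<Sum>chi\<in>Bad. cmod (hat1S G n chi) ^ 3)) \<le> fn ^ 3 * D * (E * real n ^ (3 * m))"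
    proof -
      assume TE: "real ?T * real n \<le> E * real n ^ (3 * m)"
      have "real n ^ (3 * m) * (real n * (\<Sum>chi\<in>Bad. cmod (hat1S G n chi) ^ 3))
          = real n * (real n ^ (3 * m) * (\<Sum>chi\<in>Bad. cmod (hat1S G n chi) ^ 3))" by (simp only: mult_ac)
      also have "\<dots> \<le> real n * (fn ^ 3 * D * real ?T)" using s1 by (intro mult_left_mono) auto
      also have "\<dots> = fn ^ 3 * D * (real ?T * real n)" by (simp only: mult_ac)
      also have "\<dots> \<le> fn ^ 3 * D * (E * real n ^ (3 * m))"
        using TE D0 by (intro mult_left_mono) (auto simp: fn_def)
      finally show ?thesis .
    qed
    hence "real n ^ (3 * m) * (real n * (\<Sum>chi\<in>Bad. cmod (hat1S G n chi) ^ 3)) \<le> real n ^ (3 * m) * (fn ^ 3 * D * E)"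
      by (simp only: mult_ac)
    hence "real n * (\<Sum>chi\<in>Bad. cmod (hat1S G n chi) ^ 3) \<le> fn ^ 3 * D * E"
      using n1 by (subst (asm) mult_le_cancel_left_pos) auto
    hence "(\<Sum>chi\<in>Bad. cmod (hat1S G n chi) ^ 3) \<le> D * E * ((1 / real n) * fn ^ 3)"
      using n1 by (simp add: field_simps)
    thus "let n = card (carrier G) in
       (\<Sum>chi\<in>{chi\<in>charvecs G n. sparse G n m chi \<and> chi \<notin> frakM G n m}.
           cmod (hat1S G n chi) ^ 3)
       \<le> D * E * ((1 / real n) * (fact n / real n ^ n) ^ 3)"
      unfolding Let_def n_def[symmetric] Bad_def[symmetric] fn_def[symmetric] .
  qed
qed

end
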